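(* Let $\Delta^{\mathcal T}_{\mathcal R}$ be any of the ten systems $\Delta^{\mathcal T}_{\equiv}$, $\Delta^{\mathcal T}_{=_\beta}$ ($\mathcal T\in\{CD,CDS,CDV,BCD\}$), $\Delta^{CDV}_{=_{\beta\eta}}$, $\Delta^{BCD}_{=_{\beta\eta}}$. For every strongly normalizing pure $\lambda$-term $M$ there exist a basis $B$, a type $\sigma$ and a $\Delta$-term $\Delta$ such that $\|\Delta\|\equiv M$ and $B\vdash^{\mathcal T}_{\mathcal R}\Delta:\sigma$.
   Context: Type atoms: a set $\mathbb{A}$ of symbols; $\omega$ denotes a distinguished atom (the universal type). $\mathbb{A}_\infty=\{\mathtt a_i\mid i\in\mathbb N\}$ with each $\mathtt a_i\neq\omega$, and $\mathbb{A}^\omega_\infty=\mathbb{A}_\infty\cup\{\omega\}$. Intersection types over $\mathbb A$: $\sigma::= a\mid\sigma\to\sigma\mid\sigma\cap\sigma$ ($a\in\mathbb A$). An intersection type theory $\mathcal T$ over $\mathbb A$ is a set of inequalities $\sigma\le\tau$ (written $\sigma\le_{\mathcal T}\tau$) closed under (refl) $\sigma\le\sigma$; (incl) $\sigma\cap\tau\le\sigma$ and $\sigma\cap\tau\le\tau$; (glb) $\rho\le\sigma$ and $\rho\le\tau$ imply $\rho\le\sigma\cap\tau$; (trans) $\sigma\le\tau$ and $\tau\le\rho$ imply $\sigma\le\rho$. Additional axioms/rules: $(\omega_{top})$ $\sigma\le\omega$; $(\omega_{\to})$ $\omega\le\sigma\to\omega$; $(\to\cap)$ $(\sigma\to\tau)\cap(\sigma\to\rho)\le\sigma\to(\tau\cap\rho)$;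 $(\to)$ $\sigma_2\le\sigma_1$ and $\tau_1\le\tau_2$ imply $\sigma_1\to\tau_1\le\sigma_2\to\tau_2$. $\mathcal T_{CD}$ = smallest type theory over $\mathbb A_\infty$; $\mathcal T_{CDS}$ = smallest over $\mathbb A^\omega_\infty$ containing $(\omega_{top})$; $\mathcal T_{CDV}$ = smallest over $\mathbb A_\infty$ closed under $(\to)$ and $(\to\cap)$; $\mathcal T_{BCD}$ = smallest over $\mathbb A^\omega_\infty$ closed under $(\to),(\to\cap),(\omega_{top}),(\omega_\to)$. We abbreviate these as CD, CDS, CDV, BCD. $\Delta$-terms: $\Delta::=u_\Delta\mid x\mid\lambda x{:}\sigma.\Delta\mid\Delta\,\Delta\mid\langle\Delta,\Delta\rangle\mid pr_1\Delta\mid pr_2\Delta\mid\Delta^\sigma$, where for every (not necessarily typable) $\Delta$-term $\Delta$ there is a constant $u_\Delta$. The essence $\|\Delta\|$ is the pure $\lambda$-term defined by $\|x\|=x$, $\|u_\Delta\|=\|\Delta\|$, $\|\Delta^\sigma\|=\|\Delta\|$, $\|\lambda x{:}\sigma.\Delta\|=\lambda x.\|\Delta\|$, $\|\Delta_1\Delta_2\|=\|\Delta_1\|\,\|\Delta_2\|$, $\|\langle\Delta_1,\Delta_2\rangle\|=\|\Delta_1\|$, $\|pr_i\Delta\|=\|\Delta\|$. Let $\mathcal R$ be one of $\equiv$ (syntactic identity up to $\alpha$), $=_\beta$, $=_{\beta\eta}$ on pure $\lambda$-terms. A basis $B$ is a finite set of declarations $x{:}\sigma$ with distinct variables. The typed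 system $\Delta^{\mathcal T}_{\mathcal R}$ derives $B\vdash^{\mathcal T}_{\mathcal R}\Delta:\sigma$ by: (top) $B\vdash u_\Delta:\omega$ if $\omega\in\mathbb A$; (ax) $B\vdash x:\sigma$ if $x{:}\sigma\in B$; ($\to$I) from $B,x{:}\sigma\vdash\Delta:\tau$ infer $B\vdash\lambda x{:}\sigma.\Delta:\sigma\to\tau$; ($\to$E) from $B\vdash\Delta_1:\sigma\to\tau$ and $B\vdash\Delta_2:\sigma$ infer $B\vdash\Delta_1\Delta_2:\tau$; ($\cap$I) from $B\vdash\Delta_1:\sigma$, $B\vdash\Delta_2:\tau$ and $\|\Delta_1\|\mathrel{\mathcal R}\|\Delta_2\|$ infer $B\vdash\langle\Delta_1,\Delta_2\rangle:\sigma\cap\tau$; ($\cap$E$_1$) from $B\vdash\Delta:\sigma\cap\tau$ infer $B\vdash pr_1\Delta:\sigma$; ($\cap$E$_2$) from $B\vdash\Delta:\sigma\cap\tau$ infer $B\vdash pr_2\Delta:\tau$; ($\le_{\mathcal T}$) from $B\vdash\Delta:\sigma$ and $\sigma\le_{\mathcal T}\tau$ infer $B\vdash\Delta^\tau:\tau$. We write $\Delta^{CD}_{\mathcal R}$ for $\Delta^{\mathcal T_{CD}}_{\mathcal R}$, etc. *)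

theory Defs
  imports Main
begin

section \<open>Pure lambda-terms (de Bruijn indices, so syntactic identity is identity up to alpha)\<close>

datatype lterm = LVar nat | LApp lterm lterm | LAbs lterm

fun lift :: "lterm \<Rightarrow> nat \<Rightarrow> lterm" where
  "lift (LVar i) k = (if i < k then LVar i else LVar (Suc i))"
| "lift (LApp s t) k = LApp (lift s k) (lift t k)"
| "lift (LAbs s) k = LAbs (lift s (Suc k))"

fun subst :: "lterm \<Rightarrow> lterm \<Rightarrow> nat \<Rightarrow> lterm" where
  "subst (LVar i) s k = (if k < i then LVar (i - 1) else if i = k then s else LVar i)"
| "subst (LApp t u) s k = LApp (subst t s k) (subst u s k)"
| "subst (LAbs t) s k = LAbs (subst t (lift s 0) (Suc k))"

inductive beta :: "lterm \<Rightarrow> lterm \<Rightarrow> bool" where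
  beta_redex: "beta (LApp (LAbs s) t) (subst s t 0)"
| beta_appL: "beta s t \<Longrightarrow> beta (LApp s u) (LApp t u)"
| beta_appR: "beta s t \<Longrightarrow> beta (LApp u s) (LApp u t)"
| beta_abs: "beta s t \<Longrightarrow> beta (LAbs s) (LAbs t)"

inductive betaeta :: "lterm \<Rightarrow> lterm \<Rightarrow> bool" where
  be_beta: "beta s t \<Longrightarrow> betaeta s t"
| be_eta: "betaeta (LAbs (LApp (lift t 0) (LVar 0))) t"
| be_appL: "betaeta s t \<Longrightarrow> betaeta (LApp s u) (LApp t u)"
| be_appR: "betaeta s t \<Longrightarrow> betaeta (LApp u s) (LApp u t)"
| be_abs: "betaeta s t \<Longrightarrow> betaeta (LAbs s) (LAbs t)"

definition beta_eq :: "lterm \<Rightarrow> lterm \<Rightarrow> bool" where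
  "beta_eq = (sup beta beta\<inverse>\<inverse>)\<^sup>*\<^sup>*"

definition betaeta_eq :: "lterm \<Rightarrow> lterm \<Rightarrow> bool" where
  "betaeta_eq = (sup betaeta betaeta\<inverse>\<inverse>)\<^sup>*\<^sup>*"

definition SN :: "lterm \<Rightarrow> bool" where
  "SN M = Wellfounded.accp (\<lambda>y x. beta x y) M"

datatype itype = Atom nat | Om | Arr itype itype | Cap itype itype

datatype theory_name = CD | CDS | CDV | BCD

definition has_omega :: "theory_name \<Rightarrow> bool" where
  "has_omega T = (T = CDS \<or> T = BCD)"

definition has_arrow :: "theory_name \<Rightarrow> bool" where
  "has_arrow T = (T = CDV \<or> T = BCD)"

fun omega_free :: "itype \<Rightarrow> bool" where
  "omega_free (Atom i) = True"
| "omega_free Om = False"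
| "omega_free (Arr s t) = (omega_free s \<and> omega_free t)"
| "omega_free (Cap s t) = (omega_free s \<and> omega_free t)"

text \<open>Types over the atom set of the theory: A_infinity (no omega) or A_infinity plus omega.\<close>
definition over :: "theory_name \<Rightarrow> itype \<Rightarrow> bool" where
  "over T s = (has_omega T \<or> omega_free s)"

inductive leq :: "theory_name \<Rightarrow> itype \<Rightarrow> itype \<Rightarrow> bool" for T where
  refl: "over T s \<Longrightarrow> leq T s s"
| incl1: "over T s \<Longrightarrow> over T t \<Longrightarrow> leq T (Cap s t) s"
| incl2: "over T s \<Longrightarrow> over T t \<Longrightarrow> leq T (Cap s t) t"
| glb: "leq T r s \<Longrightarrow> leq T r t \<Longrightarrow> leq T r (Cap s t)"
| trans: "leq T s t \<Longrightarrow> leq T t r \<Longrightarrow> leq T s r"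
| omega_top: "has_omega T \<Longrightarrow> leq T s Om"
| omega_arr: "T = BCD \<Longrightarrow> leq T Om (Arr s Om)"
| arr_cap: "has_arrow T \<Longrightarrow> over T s \<Longrightarrow> over T t \<Longrightarrow> over T r \<Longrightarrow>
     leq T (Cap (Arr s t) (Arr s r)) (Arr s (Cap t r))"
| arr: "has_arrow T \<Longrightarrow> leq T s2 s1 \<Longrightarrow> leq T t1 t2 \<Longrightarrow> leq T (Arr s1 t1) (Arr s2 t2)"

datatype dterm = U dterm | DVar nat | DLam itype dterm | DApp dterm dterm
  | DPair dterm dterm | Pr1 dterm | Pr2 dterm | DSub dterm itype

fun ess :: "dterm \<Rightarrow> lterm" where
  "ess (DVar x) = LVar x"
| "ess (U d) = ess d"
| "ess (DSub d s) = ess d"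
| "ess (DLam s d) = LAbs (ess d)"
| "ess (DApp d e) = LApp (ess d) (ess e)"
| "ess (DPair d e) = ess d"
| "ess (Pr1 d) = ess d"
| "ess (Pr2 d) = ess d"

datatype rel_name = Ident | Beta | BetaEta

definition Rel :: "rel_name \<Rightarrow> lterm \<Rightarrow> lterm \<Rightarrow> bool" where
  "Rel R = (case R of Ident \<Rightarrow> (=) | Beta \<Rightarrow> beta_eq | BetaEta \<Rightarrow> betaeta_eq)"

type_synonym basis = "nat \<Rightarrow> itype option"

definition is_basis :: "theory_name \<Rightarrow> basis \<Rightarrow> bool" where
  "is_basis T B = (finite (dom B) \<and> (\<forall>s\<in>ran B. over T s))"

definition extend :: "basis \<Rightarrow> itype \<Rightarrow> basis" where
  "extend B s = case_nat (Some s) B"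

inductive typed :: "theory_name \<Rightarrow> rel_name \<Rightarrow> basis \<Rightarrow> dterm \<Rightarrow> itype \<Rightarrow> bool"
  for T R where
  top: "has_omega T \<Longrightarrow> typed T R B (U d) Om"
| ax: "B x = Some s \<Longrightarrow> typed T R B (DVar x) s"
| arrI: "over T s \<Longrightarrow> typed T R (extend B s) d t \<Longrightarrow> typed T R B (DLam s d) (Arr s t)"
| arrE: "typed T R B d (Arr s t) \<Longrightarrow> typed T R B e s \<Longrightarrow> typed T R B (DApp d e) t"
| capI: "typed T R B d s \<Longrightarrow> typed T R B e t \<Longrightarrow> Rel R (ess d) (ess e)
          \<Longrightarrow> typed T R B (DPair d e) (Cap s t)"
| capE1: "typed T R B d (Cap s t) \<Longrightarrow> typed T R B (Pr1 d) s"
| capE2: "typed T R B d (Cap s t) \<Longrightarrow> typed T R B (Pr2 d) t"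
| sub: "typed T R B d s \<Longrightarrow> leq T s t \<Longrightarrow> typed T R B (DSub d t) t"

definition ten_systems :: "(theory_name \<times> rel_name) set" where
  "ten_systems = {(T, R). R = Ident \<or> R = Beta} \<union> {(CDV, BetaEta), (BCD, BetaEta)}"

end

theory Submission imports Defs begin

inductive C :: "basis \<Rightarrow> lterm \<Rightarrow> itype \<Rightarrow> bool" where
  cvar: "B x = Some s \<Longrightarrow> leq CD s t \<Longrightarrow> C B (LVar x) t"
| capp: "C B M (Arr s t) \<Longrightarrow> C B N s \<Longrightarrow> leq CD t t' \<Longrightarrow> C B (LApp M N) t'"
| cabs: "omega_free s \<Longrightarrow> C (extend B s) M t \<Longrightarrow> C B (LAbs M) (Arr s t)"
| ccap: "C B M s \<Longrightarrow> C B M t \<Longrightarrow> C B M (Cap s t)"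

lemma leq_over: "leq CD s t \<Longrightarrow> omega_free s \<and> omega_free t"
  by (induction rule: leq.induct) (auto simp: over_def has_omega_def has_arrow_def)

lemma leq_refl: "omega_free s \<Longrightarrow> leq CD s s"
  by (rule leq.refl) (simp add: over_def)

lemma leq_incl1: "omega_free s \<Longrightarrow> omega_free t \<Longrightarrow> leq CD (Cap s t) s"
  by (rule leq.incl1) (auto simp add: over_def)

lemma leq_incl2: "omega_free s \<Longrightarrow> omega_free t \<Longrightarrow> leq CD (Cap s t) t"
  by (rule leq.incl2) (auto simp add: over_def)

lemma C_of: "C B M t \<Longrightarrow> omega_free t"
  by (induction rule: C.induct) (auto dest: leq_over)

definition sqle :: "basis \<Rightarrow> basis \<Rightarrow> bool" where
  "sqle B' B = (\<forall>x s. B x = Some s \<longrightarrow> B' x = Some s \<or> (\<exists>s'. B' x = Some s' \<and> leq CD s' s))"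

lemma sqle_ext: "sqle B' B \<Longrightarrow> sqle (extend B' s) (extend B s)"
  unfolding sqle_def extend_def by (auto split: nat.split)

lemma weaken: "C B M t \<Longrightarrow> sqle B' B \<Longrightarrow> C B' M t"
proof (induction arbitrary: B' rule: C.induct)
  case (cvar B x s t)
  then show ?case unfolding sqle_def by (metis C.cvar leq.trans)
next
  case (capp B M s t N t')
  then show ?case by (metis C.capp)
next
  case (cabs s B M t)
  then show ?case by (metis C.cabs sqle_ext)
next
  case (ccap B M s t)
  then show ?case by (metis C.ccap)
qed

definition ins :: "basis \<Rightarrow> nat \<Rightarrow> itype \<Rightarrow> basis" where
  "ins B k \<sigma> i = (if i < k then B i else if i = k then Some \<sigma> else B (i - 1))"

definition del :: "basis \<Rightarrow> nat \<Rightarrow> basis" where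
  "del B k i = B (if i < k then i else Suc i)"

lemma ext_ins: "extend (ins B k \<sigma>) s = ins (extend B s) (Suc k) \<sigma>"
  by (rule ext, case_tac x) (auto simp: ins_def extend_def split: nat.split)

lemma ins0: "ins B 0 \<sigma> = extend B \<sigma>"
  by (rule ext, case_tac x) (auto simp: ins_def extend_def)

lemma del_ext: "del (extend B s) (Suc k) = extend (del B k) s"
  by (rule ext, case_tac x) (auto simp: del_def extend_def)

lemma del0: "del (extend B s) 0 = B"
  by (rule ext) (auto simp: del_def extend_def)

lemma lift_C: "C B M t \<Longrightarrow> C (ins B k \<sigma>) (lift M k) t"
proof (induction arbitrary: k rule: C.induct)
  case (cvar B x s t)
  then show ?case by (auto simp: ins_def intro!: C.cvar)
next
  case (capp B M s t N t')
  then show ?case by (auto intro: C.capp)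
next
  case (cabs s B M t)
  then show ?case by (auto simp: ext_ins intro!: C.cabs)
next
  case (ccap B M s t)
  then show ?case by (auto intro: C.ccap)
qed

lemma unlift_C: "C B' X t \<Longrightarrow> X = lift M k \<Longrightarrow> C (del B' k) M t"
proof (induction arbitrary: M k rule: C.induct)
  case (cvar B x s t)
  then show ?case by (cases M) (auto simp: del_def split: if_splits intro!: C.cvar)
next
  case (capp B M1 s t N t')
  then show ?case by (cases M) (auto split: if_splits intro!: C.capp)
next
  case (cabs s B M1 t)
  then show ?case by (cases M) (auto split: if_splits simp: del_ext[symmetric] intro!: C.cabs)
next
  case (ccap B M s t)
  then show ?case by (auto intro: C.ccap)
qed

lemma sqle_ins_cap1: "omega_free a \<Longrightarrow> omega_free b \<Longrightarrow> sqle (ins B k (Cap a b)) (ins B k a)"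
  unfolding sqle_def ins_def by (auto intro: leq_incl1)

lemma sqle_ins_cap2: "omega_free a \<Longrightarrow> omega_free b \<Longrightarrow> sqle (ins B k (Cap a b)) (ins B k b)"
  unfolding sqle_def ins_def by (auto intro: leq_incl2)

lemma inv_var: "C B' N t \<Longrightarrow> \<exists>\<sigma>. C (ins B' k \<sigma>) (LVar k) t \<and> C B' N \<sigma>"
  by (rule exI[of _ t]) (auto simp: ins_def intro!: C.cvar leq_refl dest: C_of)

lemma inv_subst: "C B' X t \<Longrightarrow> X = subst A N k \<Longrightarrow> C B' N \<sigma>0
   \<Longrightarrow> \<exists>\<sigma>. C (ins B' k \<sigma>) A t \<and> C B' N \<sigma>"
proof (induction arbitrary: A N k \<sigma>0 rule: C.induct)
  case (cvar B x s t)
  show ?case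
  proof (cases "A = LVar k")
    case True
    then show ?thesis using cvar by (auto intro!: inv_var C.cvar)
  next
    case False
    then obtain i where "A = LVar i" "i \<noteq> k" using cvar by (cases A) (auto split: if_splits)
    then show ?thesis using cvar
      by (intro exI[of _ \<sigma>0]) (auto simp: ins_def split: if_splits intro!: C.cvar)
  qed
next
  case (capp B M s t N' t')
  show ?case
  proof (cases "A = LVar k")
    case True
    then show ?thesis using capp by (auto intro!: inv_var C.capp)
  next
    case False
    then obtain A1 A2 where A: "A = LApp A1 A2" using capp by (cases A) (auto split: if_splits)
    from capp.IH(1)[of A1 N k \<sigma>0] capp.IH(2)[of A2 N k \<sigma>0] capp.prems A
    obtain \<sigma>1 \<sigma>2 where 1: "C (ins B k \<sigma>1) A1 (Arr s t)" "C B N \<sigma>1"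
      and 2: "C (ins B k \<sigma>2) A2 s" "C B N \<sigma>2" by auto
    have o: "omega_free \<sigma>1" "omega_free \<sigma>2" using 1 2 C_of by auto
    show ?thesis
      apply (rule exI[of _ "Cap \<sigma>1 \<sigma>2"])
      using 1 2 o A capp.hyps(3)
      by (auto intro!: C.capp C.ccap intro: weaken sqle_ins_cap1 sqle_ins_cap2)
  qed
next
  case (cabs s B M t)
  show ?case
  proof (cases "A = LVar k")
    case True
    then show ?thesis using cabs by (auto intro!: inv_var C.cabs)
  next
    case False
    then obtain A' where A: "A = LAbs A'" and M: "M = subst A' (lift N 0) (Suc k)"
      using cabs by (cases A) (auto split: if_splits)
    have "C (extend B s) (lift N 0) \<sigma>0" using lift_C[OF cabs.prems(2), of 0 s] by (simp add: ins0)
    from cabs.IH[OF M this] obtain \<sigma> where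
      1: "C (ins (extend B s) (Suc k) \<sigma>) A' t" "C (extend B s) (lift N 0) \<sigma>" by auto
    have "C B N \<sigma>" using unlift_C[OF 1(2), of N 0] by (simp add: del0)
    then show ?thesis using 1(1) A cabs.hyps(1) by (auto simp: ext_ins[symmetric] intro!: C.cabs)
  qed
next
  case (ccap B M s t)
  from ccap.IH(1)[OF ccap.prems] ccap.IH(2)[OF ccap.prems]
  obtain \<sigma>1 \<sigma>2 where 1: "C (ins B k \<sigma>1) A s" "C B N \<sigma>1"
      and 2: "C (ins B k \<sigma>2) A t" "C B N \<sigma>2" by auto
  have o: "omega_free \<sigma>1" "omega_free \<sigma>2" using 1 2 C_of by auto
  show ?case
    apply (rule exI[of _ "Cap \<sigma>1 \<sigma>2"])
    using 1 2 o by (auto intro!: C.ccap intro: weaken sqle_ins_cap1 sqle_ins_cap2)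
qed


definition good :: "basis \<Rightarrow> bool" where
  "good B = (finite (dom B) \<and> (\<forall>x s. B x = Some s \<longrightarrow> omega_free s))"

definition meetB :: "basis \<Rightarrow> basis \<Rightarrow> basis" where
  "meetB B1 B2 x = (case B1 x of None \<Rightarrow> B2 x | Some s \<Rightarrow>
      (case B2 x of None \<Rightarrow> Some s | Some t \<Rightarrow> Some (Cap s t)))"

lemma meet_good: "good B1 \<Longrightarrow> good B2 \<Longrightarrow> good (meetB B1 B2)"
proof -
  assume a: "good B1" "good B2"
  have "dom (meetB B1 B2) = dom B1 \<union> dom B2"
    by (auto simp: meetB_def split: option.splits)
  then show ?thesis using a unfolding good_def meetB_def
    by (auto split: option.splits)
qed

lemma meet_sqle1: "good B1 \<Longrightarrow> good B2 \<Longrightarrow> sqle (meetB B1 B2) B1"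
  unfolding sqle_def good_def meetB_def by (auto split: option.splits intro: leq_incl1)

lemma meet_sqle2: "good B1 \<Longrightarrow> good B2 \<Longrightarrow> sqle (meetB B1 B2) B2"
  unfolding sqle_def good_def meetB_def by (auto split: option.splits intro: leq_incl2)

definition apps :: "lterm \<Rightarrow> lterm list \<Rightarrow> lterm" where
  "apps h Ps = foldl LApp h Ps"

lemma apps_Nil[simp]: "apps h [] = h" and apps_Cons[simp]: "apps h (P # Ps) = apps (LApp h P) Ps"
  by (auto simp: apps_def)

fun arrows :: "itype list \<Rightarrow> itype \<Rightarrow> itype" where
  "arrows [] t = t"
| "arrows (s # ss) t = Arr s (arrows ss t)"

lemma arrows_of: "omega_free (arrows ss t) = ((\<forall>s\<in>set ss. omega_free s) \<and> omega_free t)"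
  by (induction ss) auto

lemma apps_typed: "C B h (arrows ss t) \<Longrightarrow> list_all2 (C B) Ps ss \<Longrightarrow> C B (apps h Ps) t"
proof (induction Ps arbitrary: h ss)
  case Nil
  then show ?case by simp
next
  case (Cons P Ps)
  then obtain s ss' where ss: "ss = s # ss'" "C B P s" "list_all2 (C B) Ps ss'"
    by (cases ss) auto
  have "omega_free (arrows ss' t)" using C_of[OF Cons.prems(1)] ss by simp
  then have "C B (LApp h P) (arrows ss' t)"
    using Cons.prems(1) ss by (auto intro!: C.capp leq_refl)
  then show ?case using Cons.IH ss by auto
qed

definition typable :: "lterm \<Rightarrow> bool" where
  "typable M = (\<exists>B t. good B \<and> C B M t)"

lemma args_typed: "\<forall>P\<in>set Ps. typable P \<Longrightarrow> \<exists>B ss. good B \<and> list_all2 (C B) Ps ss"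
proof (induction Ps)
  case Nil
  then show ?case by (intro exI[of _ Map.empty]) (auto simp: good_def)
next
  case (Cons P Ps)
  then obtain B ss where 1: "good B" "list_all2 (C B) Ps ss" by auto
  from Cons.prems obtain B1 t where 2: "good B1" "C B1 P t" by (auto simp: typable_def)
  have "list_all2 (C (meetB B1 B)) (P # Ps) (t # ss)"
    using 1 2 by (auto intro: weaken meet_sqle1 meet_sqle2 elim!: list_all2_mono)
  then show ?case using 1 2 meet_good by blast
qed

lemma headvar_typable: "\<forall>P\<in>set Ps. typable P \<Longrightarrow> typable (apps (LVar x) Ps)"
proof -
  assume "\<forall>P\<in>set Ps. typable P"
  from args_typed[OF this] obtain B ss where 1: "good B" "list_all2 (C B) Ps ss" by auto
  have of: "\<forall>s\<in>set ss. omega_free s" using 1(2)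
    by (induction rule: list_all2_induct) (auto dest: C_of)
  define \<tau> where "\<tau> = arrows ss (Atom 0)"
  have ot: "omega_free \<tau>" using of by (simp add: \<tau>_def arrows_of)
  define B0 where "B0 = (Map.empty(x \<mapsto> \<tau>) :: basis)"
  have g0: "good B0" using ot by (auto simp: good_def B0_def)
  have "C B0 (LVar x) \<tau>" by (auto simp: B0_def intro!: C.cvar leq_refl ot)
  then have h: "C (meetB B B0) (LVar x) \<tau>" using 1 g0 by (auto intro: weaken meet_sqle2)
  have "list_all2 (C (meetB B B0)) Ps ss" using 1 g0
    by (auto intro: weaken meet_sqle1 elim!: list_all2_mono)
  then have "C (meetB B B0) (apps (LVar x) Ps) (Atom 0)"
    using h by (intro apps_typed) (auto simp: \<tau>_def)
  then show ?thesis using meet_good[OF 1(1) g0] by (auto simp: typable_def)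
qed

lemma abs_typable: "typable A \<Longrightarrow> typable (LAbs A)"
proof -
  assume "typable A"
  then obtain B t where 1: "good B" "C B A t" by (auto simp: typable_def)
  define s where "s = (case B 0 of None \<Rightarrow> Atom 0 | Some s \<Rightarrow> s)"
  define B' where "B' = (\<lambda>i. B (Suc i))"
  have os: "omega_free s" using 1 by (auto simp: s_def good_def split: option.splits)
  have "sqle (extend B' s) B" unfolding sqle_def extend_def B'_def s_def
    by (auto split: nat.splits option.splits)
  then have "C (extend B' s) A t" using 1 weaken by blast
  then have "C B' (LAbs A) (Arr s t)" using os by (auto intro: C.cabs)
  moreover have "good B'"
  proof -
    have "dom B' = Suc -` dom B" by (auto simp: B'_def)
    then have "finite (dom B')" using 1 by (auto simp: good_def intro: finite_vimageI)
    then show ?thesis using 1 by (auto simp: good_def B'_def)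
  qed
  ultimately show ?thesis by (auto simp: typable_def)
qed

lemma expand_appL: "C B Z t \<Longrightarrow> Z = LApp X P \<Longrightarrow> (\<And>t. C B X t \<Longrightarrow> C B Y t) \<Longrightarrow> C B (LApp Y P) t"
proof (induction rule: C.induct)
  case (capp B M s t N t')
  then show ?case by (auto intro: C.capp)
next
  case (ccap B M s t)
  then show ?case by (auto intro: C.ccap)
qed auto

lemma expand_apps: "(\<And>t. C B X t \<Longrightarrow> C B Y t) \<Longrightarrow> C B (apps X Ps) t \<Longrightarrow> C B (apps Y Ps) t"
proof (induction Ps arbitrary: X Y)
  case Nil
  then show ?case by simp
next
  case (Cons P Ps)
  show ?case using Cons.IH[of "LApp X P" "LApp Y P"] Cons.prems
    by (auto intro: expand_appL)
qed

lemma expand_redex: "C B N \<sigma>0 \<Longrightarrow> C B (subst A N 0) t \<Longrightarrow> C B (LApp (LAbs A) N) t"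
proof -
  assume a: "C B N \<sigma>0" "C B (subst A N 0) t"
  from inv_subst[OF a(2) HOL.refl a(1)] obtain \<sigma> where
    h: "C (extend B \<sigma>) A t" "C B N \<sigma>" by (auto simp: ins0)
  have "C B (LAbs A) (Arr \<sigma> t)" using h C_of by (auto intro: C.cabs)
  then show ?thesis using h C_of C.capp leq_refl by metis
qed

lemma redex_typable: "typable N \<Longrightarrow> typable (apps (subst A N 0) Ps)
   \<Longrightarrow> typable (apps (LApp (LAbs A) N) Ps)"
proof -
  assume "typable N" "typable (apps (subst A N 0) Ps)"
  then obtain B1 B2 t s where 1: "good B1" "C B1 (apps (subst A N 0) Ps) t"
    and 2: "good B2" "C B2 N s" by (auto simp: typable_def)
  let ?B = "meetB B1 B2"
  have "C ?B (apps (subst A N 0) Ps) t" "C ?B N s"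
    using 1 2 by (auto intro: weaken meet_sqle1 meet_sqle2)
  then have "C ?B (apps (LApp (LAbs A) N) Ps) t"
    by (auto intro: expand_apps expand_redex)
  then show ?thesis using 1 2 meet_good by (auto simp: typable_def)
qed

definition immsub :: "lterm \<Rightarrow> lterm \<Rightarrow> bool" where
  "immsub y x = ((\<exists>u. x = LApp y u) \<or> (\<exists>u. x = LApp u y) \<or> x = LAbs y)"

definition RR :: "lterm \<Rightarrow> lterm \<Rightarrow> bool" where
  "RR z y = (immsub z y \<or> beta y z)"

lemma sub_beta: "immsub y M \<Longrightarrow> beta y z \<Longrightarrow> \<exists>M'. beta M M' \<and> immsub z M'"
  unfolding immsub_def by (auto intro: beta.intros)

lemma subs_beta: "immsub\<^sup>*\<^sup>* y M \<Longrightarrow> beta y z \<Longrightarrow> \<exists>M'. beta M M' \<and> immsub\<^sup>*\<^sup>* z M'"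
proof (induction rule: rtranclp_induct)
  case base
  then show ?case by auto
next
  case (step b c)
  then obtain b' where "beta b b'" "immsub\<^sup>*\<^sup>* z b'" by auto
  with sub_beta[OF step(2) this(1)] show ?case by (auto intro: rtranclp.rtrancl_into_rtrancl)
qed

lemma immsub_size: "immsub z y \<Longrightarrow> size z < size y"
  unfolding immsub_def by auto

lemma SN_acc_aux: "Wellfounded.accp (\<lambda>y x. beta x y) M \<Longrightarrow> \<forall>y. immsub\<^sup>*\<^sup>* y M \<longrightarrow> Wellfounded.accp RR y"
proof (induction rule: accp.induct)
  case (accI M)
  show ?case
  proof (intro allI impI)
    fix y
    show "immsub\<^sup>*\<^sup>* y M \<Longrightarrow> Wellfounded.accp RR y"
    proof (induction y rule: measure_induct_rule[of size])
      case (less y)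
      show ?case
      proof (rule accpI)
        fix z assume "RR z y"
        then consider "immsub z y" | "beta y z" unfolding RR_def by auto
        then show "Wellfounded.accp RR z"
        proof cases
          case 1
          have "immsub\<^sup>*\<^sup>* z M" using 1 less.prems by (rule converse_rtranclp_into_rtranclp)
          then show ?thesis using less(1)[of z] immsub_size[OF 1] by simp
        next
          case 2
          from subs_beta[OF less.prems 2] obtain M' where "beta M M'" "immsub\<^sup>*\<^sup>* z M'" by auto
          then show ?thesis using accI.IH by auto
        qed
      qed
    qed
  qed
qed

lemma accp_trancl: "Wellfounded.accp r x \<Longrightarrow> Wellfounded.accp r\<^sup>+\<^sup>+ x"
proof (induction rule: accp.induct)
  case (accI x)
  show ?case
  proof (rule accpI)
    fix y assume "r\<^sup>+\<^sup>+ y x"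
    then obtain z where "r\<^sup>*\<^sup>* y z" "r z x" by (cases rule: tranclp.cases) (auto intro: tranclp_into_rtranclp)
    then have a: "Wellfounded.accp r\<^sup>+\<^sup>+ z" "y = z \<or> r\<^sup>+\<^sup>+ y z"
      using accI.IH rtranclpD[of r y z] by auto
    then show "Wellfounded.accp r\<^sup>+\<^sup>+ y" using accp_downward by metis
  qed
qed

lemma SN_accR: "SN M \<Longrightarrow> Wellfounded.accp RR\<^sup>+\<^sup>+ M"
  using SN_acc_aux[of M] by (auto simp: SN_def intro: accp_trancl)

lemma head_sub: "RR\<^sup>*\<^sup>* h (apps h Ps)"
proof (induction Ps arbitrary: h)
  case (Cons P Ps)
  have "RR h (LApp h P)" by (simp add: RR_def immsub_def)
  then show ?case using Cons[of "LApp h P"] by (auto intro: converse_rtranclp_into_rtranclp)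
qed simp

lemma arg_sub: "P \<in> set Ps \<Longrightarrow> RR\<^sup>+\<^sup>+ P (apps h Ps)"
proof (induction Ps arbitrary: h)
  case (Cons Q Ps)
  show ?case
  proof (cases "P = Q")
    case True
    have "RR P (LApp h P)" by (simp add: RR_def immsub_def)
    then show ?thesis using True head_sub[of "LApp h Q" Ps] by (auto intro: rtranclp_into_tranclp2)
  next
    case False
    then show ?thesis using Cons by auto
  qed
qed simp

lemma beta_apps: "beta X Y \<Longrightarrow> beta (apps X Ps) (apps Y Ps)"
  by (induction Ps arbitrary: X Y) (auto intro: beta.intros)

lemma decomp: "(\<exists>x Ps. M = apps (LVar x) Ps) \<or> (\<exists>A. M = LAbs A) \<or> (\<exists>A N Ps. M = apps (LApp (LAbs A) N) Ps)"
proof (induction M)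
  case (LVar x)
  then show ?case by (metis apps_Nil)
next
  case (LApp M1 M2)
  have e: "apps h (Ps @ [M2]) = LApp (apps h Ps) M2" for h Ps by (simp add: apps_def)
  from LApp.IH(1) show ?case
  proof (elim disjE exE)
    fix x Ps assume "M1 = apps (LVar x) Ps" then show ?thesis using e by metis
  next
    fix A assume "M1 = LAbs A" then show ?thesis by (metis apps_Nil)
  next
    fix A N Ps assume "M1 = apps (LApp (LAbs A) N) Ps" then show ?thesis using e by metis
  qed
qed auto

lemma SN_typable: "SN M \<Longrightarrow> typable M"
proof -
  assume "SN M"
  then have "Wellfounded.accp RR\<^sup>+\<^sup>+ M" by (rule SN_accR)
  then show ?thesis
  proof (induction rule: accp.induct)
    case (accI M)
    from decomp[of M] show ?case
    proof (elim disjE exE)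
      fix x Ps assume M: "M = apps (LVar x) Ps"
      then show ?thesis using accI arg_sub by (auto intro!: headvar_typable)
    next
      fix A assume M: "M = LAbs A"
      have "RR\<^sup>+\<^sup>+ A M" by (auto simp: M RR_def immsub_def)
      then show ?thesis using accI M by (auto intro!: abs_typable)
    next
      fix A N Ps assume M: "M = apps (LApp (LAbs A) N) Ps"
      have "RR N (LApp (LAbs A) N)" by (simp add: RR_def immsub_def)
      then have a: "RR\<^sup>+\<^sup>+ N M" using head_sub[of "LApp (LAbs A) N" Ps] M
        by (auto intro: rtranclp_into_tranclp2)
      have "RR (apps (subst A N 0) Ps) M"
        by (auto simp: M RR_def intro!: beta_apps beta.intros)
      then show ?thesis using accI a M by (auto intro!: redex_typable)
    qed
  qed
qed


lemma C_typed: "C B M t \<Longrightarrow> \<exists>d. ess d = M \<and> typed CD Ident B d t"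
proof (induction rule: C.induct)
  case (cvar B x s t)
  then show ?case by (intro exI[of _ "DSub (DVar x) t"]) (auto intro: typed.intros)
next
  case (capp B M s t N t')
  then obtain d e where "ess d = M" "typed CD Ident B d (Arr s t)" "ess e = N" "typed CD Ident B e s" by auto
  then show ?case using capp.hyps(3)
    by (intro exI[of _ "DSub (DApp d e) t'"]) (auto intro: typed.intros)
next
  case (cabs s B M t)
  then obtain d where "ess d = M" "typed CD Ident (extend B s) d t" by auto
  then show ?case using cabs.hyps(1)
    by (intro exI[of _ "DLam s d"]) (auto intro: typed.intros simp: over_def)
next
  case (ccap B M s t)
  then obtain d e where "ess d = M" "typed CD Ident B d s" "ess e = M" "typed CD Ident B e t" by auto
  then show ?case
    by (intro exI[of _ "DPair d e"]) (auto intro: typed.intros simp: Rel_def)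
qed

lemma Rel_refl: "Rel R x x"
  by (cases R) (auto simp: Rel_def beta_eq_def betaeta_eq_def)

lemma leq_CD_CDV: "leq CD s t \<Longrightarrow> T = CD \<or> T = CDV \<Longrightarrow> leq T s t"
proof (induction rule: leq.induct)
qed (auto simp: over_def has_omega_def has_arrow_def intro: leq.intros)

lemma typed_mono: "typed CD Ident B d s \<Longrightarrow> T = CD \<or> T = CDV \<Longrightarrow> typed T R B d s"
proof (induction rule: typed.induct)
  case (capI B d s e t)
  then show ?case using typed.capI[of T R B d s e t] Rel_refl[of R "ess e"] by (auto simp: Rel_def)
qed (auto intro: typed.intros leq_CD_CDV simp: over_def has_omega_def)

fun emb :: "lterm \<Rightarrow> dterm" where
  "emb (LVar x) = DVar x"
| "emb (LApp s t) = DApp (emb s) (emb t)"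
| "emb (LAbs s) = DLam (Atom 0) (emb s)"

lemma ess_emb: "ess (emb M) = M"
  by (induction M) auto

theorem mainTheorem15:
  assumes "(T, R) \<in> ten_systems"
    and "SN M"
  shows "\<exists>B s d. is_basis T B \<and> ess d = M \<and> typed T R B d s"
proof (cases "has_omega T")
  case True
  have "is_basis T Map.empty" by (simp add: is_basis_def)
  moreover have "typed T R Map.empty (U (emb M)) Om" using True by (rule typed.top)
  moreover have "ess (U (emb M)) = M" by (simp add: ess_emb)
  ultimately show ?thesis by blast
next
  case False
  then have T: "T = CD \<or> T = CDV" by (cases T) (auto simp: has_omega_def)
  from SN_typable[OF assms(2)] obtain B t where g: "good B" "C B M t" by (auto simp: typable_def)
  from C_typed[OF g(2)] obtain d where "ess d = M" "typed CD Ident B d t" by auto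
  moreover have "is_basis T B" using g(1) T
    by (auto simp: is_basis_def good_def over_def has_omega_def ran_def)
  ultimately show ?thesis using typed_mono T by blast
qed

end
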